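(* Let $n_1=n_1(n)$ and $n_2=n_2(n)$ satisfy $1\ll n_1\leq n_2$, and let $G=G(n_1,n_2,p)$ with $p=\frac{d}{\sqrt{n_1n_2}}$ for a constant $d<1$. Then with high probability $g(G)=0$, i.e., $G$ is planar.
   Context: $G(n_1,n_2,p)$ denotes the binomial random bipartite graph: a random subgraph of the complete bipartite graph $K_{n_1,n_2}$ with partition classes $N_1,N_2$ of sizes $n_1,n_2$, each of the $n_1n_2$ edges included independently with probability $p$. $g(G)$ is the genus of $G$, the smallest $g$ such that $G$ embeds in the orientable surface of genus $g$. The notation $f\ll g$ means $f/g\to 0$; $1\ll n_1$ means $n_1\to\infty$. "With high probability" (whp) means with probability tending to $1$ as $n_1\to\infty$. *)

theory Defs
  imports "HOL-Analysis.Analysis" "HOL-Probability.Probability"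
begin

text \<open>For finite graphs this is equivalent to genus 0.\<close>

definition planar_graph :: "'a set \<Rightarrow> 'a set set \<Rightarrow> bool" where
  "planar_graph V E \<longleftrightarrow>
     (\<exists>(pos :: 'a \<Rightarrow> real^2) (\<gamma> :: 'a set \<Rightarrow> real \<Rightarrow> real^2).
        inj_on pos V \<and>
        (\<forall>e\<in>E. arc (\<gamma> e) \<and> {pathstart (\<gamma> e), pathfinish (\<gamma> e)} = pos ` e \<and>
                 path_image (\<gamma> e) \<inter> pos ` V = pos ` e) \<and>
        (\<forall>e\<in>E. \<forall>e'\<in>E. e \<noteq> e' \<longrightarrow>
                 path_image (\<gamma> e) \<inter> path_image (\<gamma> e') \<subseteq> pos ` (e \<inter> e')))"

definition bip_vertices :: "nat \<Rightarrow> nat \<Rightarrow> (nat + nat) set" where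
  "bip_vertices n1 n2 = Inl ` {..<n1} \<union> Inr ` {..<n2}"

definition bip_edges :: "nat \<Rightarrow> nat \<Rightarrow> (nat \<times> nat \<Rightarrow> bool) \<Rightarrow> (nat + nat) set set" where
  "bip_edges n1 n2 X = {{Inl i, Inr j} | i j. i < n1 \<and> j < n2 \<and> X (i, j)}"

definition random_bip :: "nat \<Rightarrow> nat \<Rightarrow> real \<Rightarrow> (nat \<times> nat \<Rightarrow> bool) pmf" where
  "random_bip n1 n2 p = Pi_pmf ({..<n1} \<times> {..<n2}) False (\<lambda>_. bernoulli_pmf p)"

end

theory Submission
  imports Defs
begin

definition gpath :: "'a set set \<Rightarrow> (nat \<Rightarrow> 'a) \<Rightarrow> nat \<Rightarrow> bool" where
  "gpath E f k \<longleftrightarrow> inj_on f {..k} \<and> (\<forall>t<k. {f t, f (Suc t)} \<in> E)"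

definition badg :: "'a set set \<Rightarrow> bool" where
  "badg E \<longleftrightarrow> (\<exists>f k a b c d. gpath E f k \<and> b \<le> k \<and> d \<le> k \<and> a + 2 \<le> b \<and> c + 2 \<le> d
      \<and> (a, b) \<noteq> (c, d) \<and> {f a, f b} \<in> E \<and> {f c, f d} \<in> E)"

definition nocross :: "('a \<Rightarrow> real) \<Rightarrow> 'a set set \<Rightarrow> bool" where
  "nocross r E \<longleftrightarrow> (\<forall>e\<in>E. \<forall>e'\<in>E. \<forall>x\<in>e. \<forall>y\<in>e. \<forall>z\<in>e'. \<forall>w\<in>e'.
      \<not> (r x < r z \<and> r z < r y \<and> r y < r w))"

definition edges_in :: "'a set \<Rightarrow> 'a set set \<Rightarrow> bool" where
  "edges_in V E \<longleftrightarrow> (\<forall>e\<in>E. \<exists>x y. x \<noteq> y \<and> e = {x, y} \<and> x \<in> V \<and> y \<in> V)"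

lemma badg_mono: "badg E' \<Longrightarrow> E' \<subseteq> E \<Longrightarrow> badg E"
  unfolding badg_def gpath_def by blast

lemma step_isolated:
  assumes "finite V" "v \<in> V" "\<forall>e\<in>E. v \<notin> e" "edges_in V E"
    and "inj_on r' (V - {v})" "nocross r' E"
  shows "\<exists>r. inj_on r V \<and> nocross r E"
proof -
  define M where "M = (\<Sum>x\<in>V - {v}. \<bar>r' x\<bar>)"
  have big: "r' x < M + 1" if "x \<in> V - {v}" for x
  proof -
    have "\<bar>r' x\<bar> \<le> M" unfolding M_def
      by (rule member_le_sum[where f="\<lambda>x. \<bar>r' x\<bar>"]) (use that assms(1) in auto)
    then show ?thesis by linarith
  qed
  define r where "r = r'(v := M + 1)"
  have "inj_on r V"
  proof -
    have V: "V = insert v (V - {v})" using assms(2) by blast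
    have "inj_on r (V - {v})" using assms(5) unfolding r_def inj_on_def by auto
    moreover have "r v \<notin> r ` (V - {v})"
    proof
      assume "r v \<in> r ` (V - {v})"
      then obtain x where "x \<in> V - {v}" "r v = r x" by blast
      then show False using big[of x] unfolding r_def by auto
    qed
    moreover have "V - {v} - {v} = V - {v}" by blast
    ultimately show ?thesis using inj_on_insert[of r v "V - {v}"] insert_Diff[OF assms(2)] by metis
  qed
  moreover have "nocross r E"
  proof -
    have "\<forall>e\<in>E. \<forall>x\<in>e. r x = r' x" using assms(3) unfolding r_def by auto
    then show ?thesis using assms(6) unfolding nocross_def by metis
  qed
  ultimately show ?thesis by blast
qed

lemma step_leaf:
  assumes "finite V" "v \<in> V" "{e\<in>E. v \<in> e} = {{v, u}}" "edges_in V E"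
    and "inj_on r' (V - {v})" "nocross r' (E - {{v, u}})"
  shows "\<exists>r. inj_on r V \<and> nocross r E"
proof -
  define E' where "E' = E - {{v, u}}"
  have vuE: "{v, u} \<in> E" using assms(3) by blast
  then obtain x y where "x \<noteq> y" "{v,u} = {x,y}" "x \<in> V" "y \<in> V" using assms(4) unfolding edges_in_def by blast
  then have uv: "u \<noteq> v" "u \<in> V" by (auto simp: doubleton_eq_iff)
  have E'V: "\<forall>e\<in>E'. \<forall>z\<in>e. z \<in> V - {v}"
  proof (intro ballI)
    fix e z assume "e \<in> E'" "z \<in> e"
    then have "e \<in> E" "e \<noteq> {v,u}" unfolding E'_def by auto
    then have "v \<notin> e" using assms(3) by blast
    moreover have "z \<in> V"
    proof -
      obtain a b where "e = {a,b}" "a \<in> V" "b \<in> V" using \<open>e \<in> E\<close> assms(4) unfolding edges_in_def by metis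
      then show ?thesis using \<open>z \<in> e\<close> by auto
    qed
    ultimately show "z \<in> V - {v}" using \<open>z \<in> e\<close> by blast
  qed
  define S where "S = insert (r' u + 1) (r' ` {x \<in> V - {v}. r' x > r' u})"
  have finS: "finite S" unfolding S_def using assms(1) by auto
  define m where "m = Min S"
  have m1: "r' u < m" unfolding m_def using finS by (subst Min_gr_iff) (auto simp: S_def)
  have m2: "m \<le> r' x" if "x \<in> V - {v}" "r' x > r' u" for x
    unfolding m_def using finS that by (intro Min_le) (auto simp: S_def)
  define t where "t = (r' u + m) / 2"
  have t1: "r' u < t" "t < m" using m1 unfolding t_def by auto
  have gap: "r' z \<le> r' u \<or> r' z > t" if "z \<in> V - {v}" for z
    using m2[OF that] t1 by force
  define r where "r = r'(v := t)"
  have rr: "r z = r' z" if "z \<in> V - {v}" for z using that unfolding r_def by auto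
  have rv: "r v = t" unfolding r_def by simp
  have ru: "r u = r' u" using uv unfolding r_def by simp
  have "inj_on r V"
  proof -
    have V: "V = insert v (V - {v})" using assms(2) by blast
    have "inj_on r (V - {v})" using assms(5) rr unfolding inj_on_def by auto
    moreover have "r v \<notin> r ` (V - {v})"
    proof
      assume "r v \<in> r ` (V - {v})"
      then obtain x where "x \<in> V - {v}" "r v = r x" by blast
      then show False using gap[of x] rr[of x] rv t1 by auto
    qed
    moreover have "V - {v} - {v} = V - {v}" by blast
    ultimately show ?thesis using inj_on_insert[of r v "V - {v}"] insert_Diff[OF assms(2)] by metis
  qed
  moreover have "nocross r E"
    unfolding nocross_def
  proof (intro ballI)
    fix e e' x y z w assume ee: "e \<in> E" "e' \<in> E" "x \<in> e" "y \<in> e" "z \<in> e'" "w \<in> e'"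
    have EE: "E = insert {v,u} E'" unfolding E'_def using vuE by blast
    show "\<not> (r x < r z \<and> r z < r y \<and> r y < r w)"
    proof (cases "e = {v,u}")
      case True
      then have xy: "x = v \<or> x = u" "y = v \<or> y = u" using ee by auto
      show ?thesis
      proof (cases "e' = {v,u}")
        case True
        then have "z = v \<or> z = u" "w = v \<or> w = u" using ee by auto
        then have "r z \<in> {t, r' u}" "r w \<in> {t, r' u}" using rv ru by auto
        moreover have "r x \<in> {t, r' u}" "r y \<in> {t, r' u}" using xy rv ru by auto
        ultimately show ?thesis by auto
      next
        case False
        then have "e' \<in> E'" using ee EE by auto
        then have "z \<in> V - {v}" "w \<in> V - {v}" using E'V ee by auto
        moreover have "r x \<in> {t, r' u}" "r y \<in> {t, r' u}" using xy rv ru by auto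
        ultimately show ?thesis using gap[of z] rr[of z] t1 by auto
      qed
    next
      case False
      then have "e \<in> E'" using ee EE by auto
      then have xyV: "x \<in> V - {v}" "y \<in> V - {v}" using E'V ee by auto
      show ?thesis
      proof (cases "e' = {v,u}")
        case True
        then have "z = v \<or> z = u" "w = v \<or> w = u" using ee by auto
        then have "z = v \<or> z = u" "w = v \<or> w = u" using ee by auto
        then have "r z \<in> {t, r' u}" "r w \<in> {t, r' u}" using rv ru by auto
        then show ?thesis using xyV gap[of y] rr[of y] t1 by auto
      next
        case False
        then have "e' \<in> E'" using ee EE by auto
        then have "z \<in> V - {v}" "w \<in> V - {v}" using E'V ee by auto
        then show ?thesis using xyV rr assms(6) \<open>e \<in> E'\<close> \<open>e' \<in> E'\<close> ee
          unfolding nocross_def E'_def by metis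
      qed
    qed
  qed
  ultimately show ?thesis by blast
qed

lemma edge_other:
  assumes "edges_in V E" "e \<in> E" "x \<in> e"
  shows "\<exists>y. y \<noteq> x \<and> y \<in> V \<and> x \<in> V \<and> e = {x, y}"
proof -
  obtain a b where "a \<noteq> b" "e = {a,b}" "a \<in> V" "b \<in> V" using assms(1,2) unfolding edges_in_def by metis
  then show ?thesis using assms(3) by (auto simp: insert_commute)
qed

lemma gpath_front:
  assumes "gpath E f k" "y \<notin> f ` {..k}" "{f 0, y} \<in> E"
  shows "gpath E (\<lambda>t. if t = 0 then y else f (t - 1)) (Suc k)"
  unfolding gpath_def
proof (intro conjI allI impI)
  have inj: "inj_on f {..k}" using assms(1) unfolding gpath_def by blast
  show "inj_on (\<lambda>t. if t = 0 then y else f (t - 1)) {..Suc k}"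
    unfolding inj_on_def
  proof (intro ballI impI)
    fix a b assume ab: "a \<in> {..Suc k}" "b \<in> {..Suc k}" "(if a = 0 then y else f (a - 1)) = (if b = 0 then y else f (b - 1))"
    show "a = b"
    proof (cases "a = 0"; cases "b = 0")
      assume "a \<noteq> 0" "b \<noteq> 0"
      then have "f (a - 1) = f (b - 1)" "a - 1 \<in> {..k}" "b - 1 \<in> {..k}" using ab by auto
      then have "a - 1 = b - 1" using inj unfolding inj_on_def by blast
      then show ?thesis using \<open>a \<noteq> 0\<close> \<open>b \<noteq> 0\<close> by arith
    qed (use ab assms(2) in auto)
  qed
  fix t assume "t < Suc k"
  show "{if t = 0 then y else f (t - 1), if Suc t = 0 then y else f (Suc t - 1)} \<in> E"
  proof (cases "t = 0")
    case True then show ?thesis using assms(3) by (simp add: insert_commute)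
  next
    case False
    then have "t - 1 < k" "Suc (t - 1) = t" using \<open>t < Suc k\<close> by auto
    moreover have "{f (t - 1), f (Suc (t - 1))} \<in> E" using assms(1) \<open>t - 1 < k\<close> unfolding gpath_def by blast
    ultimately show ?thesis using False by simp
  qed
qed

lemma gpath_back:
  assumes "gpath E f k" "y \<notin> f ` {..k}" "{f k, y} \<in> E"
  shows "gpath E (f(Suc k := y)) (Suc k)"
  unfolding gpath_def
proof (intro conjI allI impI)
  have inj: "inj_on f {..k}" using assms(1) unfolding gpath_def by blast
  have "{..Suc k} = insert (Suc k) {..k}" by auto
  moreover have "inj_on (f(Suc k := y)) {..k}" using inj unfolding inj_on_def by auto
  moreover have "y \<notin> (f(Suc k := y)) ` {..k}" using assms(2) by auto
  ultimately show "inj_on (f(Suc k := y)) {..Suc k}" by (simp add: inj_on_insert)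
  fix t assume "t < Suc k"
  show "{(f(Suc k := y)) t, (f(Suc k := y)) (Suc t)} \<in> E"
  proof (cases "t = k")
    case True then show ?thesis using assms(3) by simp
  next
    case False
    then show ?thesis using assms(1) \<open>t < Suc k\<close> unfolding gpath_def by auto
  qed
qed

definition rot :: "nat \<Rightarrow> nat \<Rightarrow> nat \<Rightarrow> nat" where
  "rot k i t = (if t \<le> i then i - t else k + i + 1 - t)"

lemma rot_range: "i \<le> k \<Longrightarrow> t \<le> k \<Longrightarrow> rot k i t \<le> k"
  unfolding rot_def by auto

lemma rot_inj: "i \<le> k \<Longrightarrow> inj_on (rot k i) {..k}"
  unfolding rot_def inj_on_def
proof (intro ballI impI)
  fix x y assume "i \<le> k" "x \<in> {..k}" "y \<in> {..k}"
    "(if x \<le> i then i - x else k + i + 1 - x) = (if y \<le> i then i - y else k + i + 1 - y)"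
  then show "x = y" by (cases "x \<le> i"; cases "y \<le> i") simp_all
qed

lemma gpath_rot:
  assumes "gpath E f k" "i \<le> k" "{f 0, f k} \<in> E"
  shows "gpath E (f \<circ> rot k i) k"
  unfolding gpath_def
proof (intro conjI allI impI)
  have inj: "inj_on f {..k}" using assms(1) unfolding gpath_def by blast
  show "inj_on (f \<circ> rot k i) {..k}"
    using comp_inj_on[OF rot_inj[OF assms(2)], of f] inj rot_range[OF assms(2)]
    by (metis atMost_iff image_subset_iff inj_on_subset)
  fix t assume t: "t < k"
  have pe: "{f s, f (Suc s)} \<in> E" if "s < k" for s using assms(1) that unfolding gpath_def by blast
  consider "t < i" | "t = i" | "t > i" by arith
  then show "{(f \<circ> rot k i) t, (f \<circ> rot k i) (Suc t)} \<in> E"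
  proof cases
    case 1
    then have "rot k i t = Suc (i - Suc t)" "rot k i (Suc t) = i - Suc t" unfolding rot_def by auto
    moreover have "i - Suc t < k" using 1 assms(2) by arith
    ultimately show ?thesis using pe[of "i - Suc t"] by (simp add: insert_commute)
  next
    case 2
    then have "rot k i t = 0" "rot k i (Suc t) = k" unfolding rot_def using t by auto
    then show ?thesis using assms(3) by simp
  next
    case 3
    then have "rot k i t = Suc (k + i - t)" "rot k i (Suc t) = k + i - t" unfolding rot_def using t by auto
    moreover have "k + i - t < k" using 3 t by arith
    ultimately show ?thesis using pe[of "k + i - t"] by (simp add: insert_commute)
  qed
qed

lemma rot_image: "i \<le> k \<Longrightarrow> (f \<circ> rot k i) ` {..k} = f ` {..k}"
proof -
  assume ik: "i \<le> k"
  have "rot k i ` {..k} = {..k}"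
    using rot_inj[OF ik] rot_range[OF ik]
    by (intro endo_inj_surj) (auto)
  then show ?thesis by (metis image_comp)
qed

lemma rot_0: "rot k i 0 = i" unfolding rot_def by simp

lemma longest_path:
  assumes "finite V" "V \<noteq> {}"
  obtains f k where "gpath E f k" "f ` {..k} \<subseteq> V"
    "\<And>g k'. gpath E g k' \<Longrightarrow> g ` {..k'} \<subseteq> V \<Longrightarrow> k' \<le> k"
proof -
  define K where "K = {k. \<exists>f. gpath E f k \<and> f ` {..k} \<subseteq> V}"
  obtain v where v: "v \<in> V" using assms(2) by blast
  have "0 \<in> K" unfolding K_def gpath_def using v by (intro CollectI exI[of _ "\<lambda>_. v"]) auto
  have bnd: "k < card V" if kK: "k \<in> K" for k
  proof -
    obtain f where f: "gpath E f k" "f ` {..k} \<subseteq> V" using kK unfolding K_def by blast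
    have "card {..k} \<le> card V"
      using card_inj_on_le[of f "{..k}" V] f assms(1) unfolding gpath_def by blast
    then show ?thesis by simp
  qed
  have finK: "finite K" using bnd by (meson finite_nat_set_iff_bounded)
  define k where "k = Max K"
  have "k \<in> K" unfolding k_def using finK \<open>0 \<in> K\<close> by (intro Max_in) auto
  then obtain f where f: "gpath E f k" "f ` {..k} \<subseteq> V" unfolding K_def by blast
  have "\<forall>g k'. gpath E g k' \<and> g ` {..k'} \<subseteq> V \<longrightarrow> k' \<le> k"
    unfolding k_def using finK by (auto simp: K_def intro!: Max_ge)
  then show ?thesis using f that by blast
qed

definition cyc_edges :: "(nat \<Rightarrow> 'a) \<Rightarrow> nat \<Rightarrow> 'a set set" where
  "cyc_edges f k = insert {f 0, f k} ((\<lambda>t. {f t, f (Suc t)}) ` {..<k})"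

lemma cycle_found:
  assumes "finite V" "V \<noteq> {}" "edges_in V E" "\<not> badg E"
    and noiso: "\<forall>v\<in>V. \<exists>e\<in>E. v \<in> e"
    and noleaf: "\<forall>v\<in>V. \<forall>u. {e\<in>E. v \<in> e} \<noteq> {{v, u}}"
  shows "\<exists>f k. 2 \<le> k \<and> gpath E f k \<and> f ` {..k} \<subseteq> V \<and> {f 0, f k} \<in> E \<and>
           (\<forall>e\<in>E. e \<inter> f ` {..k} \<noteq> {} \<longrightarrow> e \<in> cyc_edges f k)"
proof -
  obtain f k where f: "gpath E f k" "f ` {..k} \<subseteq> V"
    and maxk: "\<And>g k'. gpath E g k' \<Longrightarrow> g ` {..k'} \<subseteq> V \<Longrightarrow> k' \<le> k"
    using longest_path[OF assms(1,2), of E] by metis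
  have inj: "inj_on f {..k}" using f unfolding gpath_def by blast
  have pe: "{f s, f (Suc s)} \<in> E" if "s < k" for s using f that unfolding gpath_def by blast
  have eV: "y \<in> V" if "{x, y} \<in> E" for x y
    using edge_other[OF assms(3) that, of y] by auto
  have front: "y \<in> f ` {..k}" if "{f 0, y} \<in> E" for y
  proof (rule ccontr)
    assume ny: "y \<notin> f ` {..k}"
    have "gpath E (\<lambda>t. if t = 0 then y else f (t - 1)) (Suc k)" by (rule gpath_front[OF f(1) ny that])
    moreover have "(\<lambda>t. if t = 0 then y else f (t - 1)) ` {..Suc k} \<subseteq> V"
      using f(2) eV[OF that] by (auto simp: image_subset_iff)
    ultimately show False using maxk by fastforce
  qed
  have bck: "y \<in> f ` {..k}" if "{f k, y} \<in> E" for y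
  proof (rule ccontr)
    assume ny: "y \<notin> f ` {..k}"
    have "gpath E (f(Suc k := y)) (Suc k)" by (rule gpath_back[OF f(1) ny that])
    moreover have "(f(Suc k := y)) ` {..Suc k} \<subseteq> V"
      using f(2) eV[OF that] by (auto simp: image_subset_iff)
    ultimately show False using maxk by fastforce
  qed
  have two: "\<exists>y1 y2. y1 \<noteq> y2 \<and> y1 \<noteq> x \<and> y2 \<noteq> x \<and> {x, y1} \<in> E \<and> {x, y2} \<in> E" if xV: "x \<in> V" for x
  proof -
    obtain e where e: "e \<in> E" "x \<in> e" using noiso xV by blast
    obtain y1 where y1: "y1 \<noteq> x" "e = {x, y1}" using edge_other[OF assms(3) e] by blast
    have "{e\<in>E. x \<in> e} \<noteq> {{x, y1}}" using noleaf xV by blast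
    moreover have "{x, y1} \<in> {e\<in>E. x \<in> e}" using e y1 by blast
    ultimately obtain e' where e': "e' \<in> E" "x \<in> e'" "e' \<noteq> {x, y1}" by blast
    obtain y2 where y2: "y2 \<noteq> x" "e' = {x, y2}" using edge_other[OF assms(3) e'(1,2)] by blast
    have "y1 \<noteq> y2" using e' y2 by auto
    then show ?thesis using y1 y2 e e' by blast
  qed
  have f0V: "f 0 \<in> V" "f k \<in> V" using f(2) by auto
  obtain b where b: "2 \<le> b" "b \<le> k" "{f 0, f b} \<in> E"
  proof -
    obtain y1 y2 where y: "y1 \<noteq> y2" "y1 \<noteq> f 0" "y2 \<noteq> f 0" "{f 0, y1} \<in> E" "{f 0, y2} \<in> E"
      using two[OF f0V(1)] by blast
    obtain j1 where j1: "j1 \<le> k" "y1 = f j1" using front[OF y(4)] by auto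
    obtain j2 where j2: "j2 \<le> k" "y2 = f j2" using front[OF y(5)] by auto
    have "j1 \<noteq> 0" using y(2) j1(2) by metis
    have "j2 \<noteq> 0" using y(3) j2(2) by metis
    have "j1 \<noteq> j2" using y(1) j1(2) j2(2) by metis
    then have "2 \<le> j1 \<or> 2 \<le> j2" using \<open>j1 \<noteq> 0\<close> \<open>j2 \<noteq> 0\<close> by arith
    moreover have "{f 0, f j1} \<in> E" "{f 0, f j2} \<in> E" using y(4,5) j1(2) j2(2) by simp_all
    ultimately show ?thesis using that j1(1) j2(1) by blast
  qed
  obtain c where c: "c + 2 \<le> k" "{f c, f k} \<in> E"
  proof -
    obtain y1 y2 where y: "y1 \<noteq> y2" "y1 \<noteq> f k" "y2 \<noteq> f k" "{f k, y1} \<in> E" "{f k, y2} \<in> E"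
      using two[OF f0V(2)] by blast
    obtain j1 where j1: "j1 \<le> k" "y1 = f j1" using bck[OF y(4)] by auto
    obtain j2 where j2: "j2 \<le> k" "y2 = f j2" using bck[OF y(5)] by auto
    have "j1 \<noteq> k" using y(2) j1(2) by metis
    have "j2 \<noteq> k" using y(3) j2(2) by metis
    have "j1 \<noteq> j2" using y(1) j1(2) j2(2) by metis
    then have "j1 + 2 \<le> k \<or> j2 + 2 \<le> k" using \<open>j1 \<noteq> k\<close> \<open>j2 \<noteq> k\<close> j1(1) j2(1) by arith
    moreover have "{f j1, f k} \<in> E" "{f j2, f k} \<in> E" using y(4,5) j1(2) j2(2) by (simp_all add: insert_commute)
    ultimately show ?thesis using that by blast
  qed
  have "(0, b) = (c, k)"
  proof (rule ccontr)
    assume "(0, b) \<noteq> (c, k)"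
    then have "badg E" unfolding badg_def using f(1) b c by (intro exI[of _ f] exI[of _ k] exI[of _ 0] exI[of _ b] exI[of _ c] exI[of _ k]) auto
    then show False using assms(4) by blast
  qed
  then have bk: "b = k" "c = 0" by auto
  have closing: "{f 0, f k} \<in> E" using b bk by simp
  have k2: "2 \<le> k" using b bk by simp
  have closed: "e \<in> cyc_edges f k" if e: "e \<in> E" "e \<inter> f ` {..k} \<noteq> {}" for e
  proof -
    obtain i where i: "i \<le> k" "f i \<in> e" using e by auto
    obtain y where y: "y \<noteq> f i" "e = {f i, y}" using edge_other[OF assms(3) e(1) i(2)] by blast
    show ?thesis
    proof (cases "y \<in> f ` {..k}")
      case False
      define g where "g = f \<circ> rot k i"
      have g: "gpath E g k" unfolding g_def by (rule gpath_rot[OF f(1) i(1) closing])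
      have gim: "g ` {..k} = f ` {..k}" unfolding g_def by (rule rot_image[OF i(1)])
      have g0: "g 0 = f i" unfolding g_def by (simp add: rot_0)
      have "gpath E (\<lambda>t. if t = 0 then y else g (t - 1)) (Suc k)"
      proof (rule gpath_front[OF g])
        show "y \<notin> g ` {..k}" using False gim by simp
        show "{g 0, y} \<in> E" using g0 e(1) y(2) by simp
      qed
      moreover have "(\<lambda>t. if t = 0 then y else g (t - 1)) ` {..Suc k} \<subseteq> V"
      proof -
        have "y \<in> V" using eV e y by blast
        moreover have "g ` {..k} \<subseteq> V" using gim f(2) by simp
        ultimately show ?thesis by (auto simp: image_subset_iff)
      qed
      ultimately show ?thesis using maxk by fastforce
    next
      case True
      then obtain j where j: "j \<le> k" "y = f j" by auto
      have ij: "i \<noteq> j" using y j by auto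
      show ?thesis
      proof (rule ccontr)
        assume nc: "e \<notin> cyc_edges f k"
        define a where "a = min i j"
        define a' where "a' = max i j"
        have eab: "e = {f a, f a'}" unfolding a_def a'_def using y j
          by (cases "i \<le> j") (auto simp: insert_commute min_def max_def)
        have "a' \<noteq> Suc a"
        proof
          assume "a' = Suc a"
          then have "e = {f a, f (Suc a)}" using eab by simp
          moreover have "a < k" using \<open>a' = Suc a\<close> i j unfolding a'_def by auto
          ultimately show False using nc unfolding cyc_edges_def by blast
        qed
        then have "a + 2 \<le> a'" using ij unfolding a_def a'_def by auto
        moreover have "(a, a') \<noteq> (0, k)" using nc eab unfolding cyc_edges_def by auto
        moreover have "a' \<le> k" using i j unfolding a'_def by auto
        ultimately have "badg E" unfolding badg_def using f(1) closing eab e(1) k2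
          by (intro exI[of _ f] exI[of _ k] exI[of _ a] exI[of _ a'] exI[of _ 0] exI[of _ k]) auto
        then show False using assms(4) by blast
      qed
    qed
  qed
  show ?thesis using k2 f closing closed by blast
qed

lemma cycle_embed:
  assumes "finite V" "edges_in V E" "gpath E f k" "f ` {..k} \<subseteq> V" "{f 0, f k} \<in> E"
    and closed: "\<forall>e\<in>E. e \<inter> f ` {..k} \<noteq> {} \<longrightarrow> e \<in> cyc_edges f k"
    and r': "inj_on r' (V - f ` {..k})" "nocross r' (E - cyc_edges f k)"
  shows "\<exists>r. inj_on r V \<and> nocross r E"
proof -
  define C where "C = f ` {..k}"
  define CE where "CE = cyc_edges f k"
  have inj: "inj_on f {..k}" using assms(3) unfolding gpath_def by blast
  define idx where "idx x = the_inv_into {..k} f x" for x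
  have idx_f: "idx (f i) = i" if "i \<le> k" for i
    unfolding idx_def using the_inv_into_f_f[OF inj] that by simp
  have idxC: "idx x \<le> k" "f (idx x) = x" if "x \<in> C" for x
    using that idx_f unfolding C_def by auto
  define M where "M = (\<Sum>x\<in>V - C. \<bar>r' x\<bar>)"
  have big: "r' x < M + 1" if "x \<in> V - C" for x
  proof -
    have "\<bar>r' x\<bar> \<le> M" unfolding M_def
      by (rule member_le_sum[where f="\<lambda>x. \<bar>r' x\<bar>"]) (use that assms(1) in auto)
    then show ?thesis by linarith
  qed
  define r where "r x = (if x \<in> C then M + 1 + real (idx x) else r' x)" for x
  have rC: "r x = M + 1 + real (idx x)" if "x \<in> C" for x using that unfolding r_def by simp
  have rN: "r x = r' x" if "x \<notin> C" for x using that unfolding r_def by simp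
  have EV: "\<forall>x\<in>e. x \<in> V - C" if "e \<in> E - CE" for e
  proof
    fix x assume "x \<in> e"
    have "e \<inter> C = {}" using closed that unfolding C_def CE_def by blast
    moreover have "x \<in> V" using edge_other[OF assms(2), of e x] that \<open>x \<in> e\<close> by auto
    ultimately show "x \<in> V - C" using \<open>x \<in> e\<close> by blast
  qed
  have CEi: "(\<exists>t<k. \<forall>x\<in>e. x \<in> C \<and> (idx x = t \<or> idx x = Suc t)) \<or> (\<forall>x\<in>e. x \<in> C \<and> (idx x = 0 \<or> idx x = k))"
    if eCE: "e \<in> CE" for e
  proof -
    consider "e = {f 0, f k}" | t where "t < k" "e = {f t, f (Suc t)}" using eCE unfolding CE_def cyc_edges_def by blast
    then show ?thesis
    proof cases
      case 1
      then show ?thesis using idx_f[of 0] idx_f[of k] unfolding C_def by auto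
    next
      case 2
      then show ?thesis using idx_f[of t] idx_f[of "Suc t"] unfolding C_def by auto
    qed
  qed
  have "inj_on r V"
    unfolding inj_on_def
  proof (intro ballI impI)
    fix x y assume xy: "x \<in> V" "y \<in> V" "r x = r y"
    show "x = y"
    proof (cases "x \<in> C"; cases "y \<in> C")
      assume "x \<in> C" "y \<in> C"
      then have "idx x = idx y" using xy rC by simp
      then show ?thesis using idxC \<open>x \<in> C\<close> \<open>y \<in> C\<close> by metis
    next
      assume "x \<notin> C" "y \<notin> C"
      then show ?thesis using xy rN r'(1) unfolding inj_on_def C_def by auto
    next
      assume "x \<in> C" "y \<notin> C"
      then show ?thesis using xy rC[of x] rN[of y] big[of y] by auto
    next
      assume "x \<notin> C" "y \<in> C"
      then show ?thesis using xy rC[of y] rN[of x] big[of x] by auto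
    qed
  qed
  moreover have "nocross r E"
    unfolding nocross_def
  proof (intro ballI)
    fix e e' x y z w assume ee: "e \<in> E" "e' \<in> E" "x \<in> e" "y \<in> e" "z \<in> e'" "w \<in> e'"
    show "\<not> (r x < r z \<and> r z < r y \<and> r y < r w)"
    proof (cases "e \<in> CE"; cases "e' \<in> CE")
      assume "e \<notin> CE" "e' \<notin> CE"
      then have "x \<in> V - C" "y \<in> V - C" "z \<in> V - C" "w \<in> V - C" using EV ee by auto
      moreover have "e \<in> E - cyc_edges f k" "e' \<in> E - cyc_edges f k" using ee \<open>e \<notin> CE\<close> \<open>e' \<notin> CE\<close> unfolding CE_def by auto
      ultimately have "\<not> (r' x < r' z \<and> r' z < r' y \<and> r' y < r' w)"
        using r'(2) ee unfolding nocross_def by blast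
      then show ?thesis using rN \<open>x \<in> V - C\<close> \<open>y \<in> V - C\<close> \<open>z \<in> V - C\<close> \<open>w \<in> V - C\<close> by simp
    next
      assume "e \<notin> CE" "e' \<in> CE"
      then have "y \<in> V - C" "z \<in> C" using EV ee CEi by auto
      then show ?thesis using rN[of y] rC[of z] big[of y] by auto
    next
      assume "e \<in> CE" "e' \<notin> CE"
      then have "z \<in> V - C" "x \<in> C" using EV ee CEi by auto
      then show ?thesis using rN[of z] rC[of x] big[of z] by auto
    next
      assume "e \<in> CE" "e' \<in> CE"
      then have C4: "x \<in> C" "y \<in> C" "z \<in> C" "w \<in> C" using CEi ee by blast+
      have lt: "r a < r b \<longleftrightarrow> idx a < idx b" if "a \<in> C" "b \<in> C" for a b
        using rC[OF that(1)] rC[OF that(2)] by simp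
      have "\<not> (idx x < idx z \<and> idx z < idx y \<and> idx y < idx w)"
      proof -
        have "idx w \<le> k" using idxC C4 by blast
        moreover have "(\<exists>t. (idx x = t \<or> idx x = Suc t) \<and> (idx y = t \<or> idx y = Suc t)) \<or>
                       ((idx x = 0 \<or> idx x = k) \<and> (idx y = 0 \<or> idx y = k))"
          using CEi[OF \<open>e \<in> CE\<close>] ee by blast
        ultimately show ?thesis by auto
      qed
      then show ?thesis using lt C4 by simp
    qed
  qed
  ultimately show ?thesis by blast
qed

lemma edges_in_sub:
  assumes "edges_in V E" "E' \<subseteq> E" "\<forall>e\<in>E'. e \<inter> A = {}"
  shows "edges_in (V - A) E'"
  unfolding edges_in_def
proof
  fix e assume e: "e \<in> E'"
  then have "e \<in> E" using assms(2) by blast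
  then obtain x y where xy: "x \<noteq> y" "e = {x, y}" "x \<in> V" "y \<in> V"
    using assms(1) unfolding edges_in_def by metis
  then have "x \<notin> A" "y \<notin> A" using assms(3) e by auto
  then show "\<exists>x y. x \<noteq> y \<and> e = {x, y} \<and> x \<in> V - A \<and> y \<in> V - A"
    using xy by (intro exI[of _ x] exI[of _ y]) auto
qed

lemma comb_main:
  "finite V \<Longrightarrow> edges_in V E \<Longrightarrow> \<not> badg E \<Longrightarrow> \<exists>r. inj_on r V \<and> nocross r E"
proof (induction "card V" arbitrary: V E rule: less_induct)
  case less
  show ?case
  proof (cases "V = {}")
    case True
    then have "E = {}" using less.prems(2) unfolding edges_in_def by blast
    then show ?thesis using True by (auto simp: nocross_def)
  next
    case Vne: False
    show ?thesis
    proof (cases "\<exists>v\<in>V. \<forall>e\<in>E. v \<notin> e")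
      case True
      then obtain v where v: "v \<in> V" "\<forall>e\<in>E. v \<notin> e" by blast
      have "edges_in (V - {v}) E" using edges_in_sub[OF less.prems(2), of E "{v}"] v by blast
      moreover have "card (V - {v}) < card V" using v less.prems(1) by (meson card_Diff1_less)
      ultimately obtain r' where "inj_on r' (V - {v})" "nocross r' E"
        using less.hyps less.prems by blast
      then show ?thesis using step_isolated[OF less.prems(1) v less.prems(2)] by blast
    next
      case noiso: False
      show ?thesis
      proof (cases "\<exists>v\<in>V. \<exists>u. {e\<in>E. v \<in> e} = {{v, u}}")
        case True
        then obtain v u where v: "v \<in> V" "{e\<in>E. v \<in> e} = {{v, u}}" by blast
        have "edges_in (V - {v}) (E - {{v, u}})"
          using edges_in_sub[OF less.prems(2), of "E - {{v, u}}" "{v}"] v(2) by blast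
        moreover have "card (V - {v}) < card V" using v less.prems(1) by (meson card_Diff1_less)
        moreover have "\<not> badg (E - {{v, u}})" using less.prems(3) badg_mono by blast
        ultimately obtain r' where "inj_on r' (V - {v})" "nocross r' (E - {{v, u}})"
          using less.hyps less.prems(1) by blast
        then show ?thesis using step_leaf[OF less.prems(1) v less.prems(2)] by blast
      next
        case noleaf: False
        obtain f k where fk: "2 \<le> k" "gpath E f k" "f ` {..k} \<subseteq> V" "{f 0, f k} \<in> E"
          and closed: "\<forall>e\<in>E. e \<inter> f ` {..k} \<noteq> {} \<longrightarrow> e \<in> cyc_edges f k"
          using cycle_found[OF less.prems(1) Vne less.prems(2,3)] noiso noleaf by blast
        define C where "C = f ` {..k}"
        have "edges_in (V - C) (E - cyc_edges f k)"
          using edges_in_sub[OF less.prems(2), of "E - cyc_edges f k" C] closed unfolding C_def by blast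
        moreover have "card (V - C) < card V"
        proof -
          have "f 0 \<in> C" unfolding C_def by auto
          moreover have "C \<subseteq> V" using fk(3) unfolding C_def .
          ultimately have "V - C \<subset> V" by blast
          then show ?thesis using less.prems(1) by (rule psubset_card_mono[rotated])
        qed
        moreover have "\<not> badg (E - cyc_edges f k)" using less.prems(3) badg_mono by blast
        ultimately obtain r' where "inj_on r' (V - C)" "nocross r' (E - cyc_edges f k)"
          using less.hyps less.prems(1) by blast
        then show ?thesis using cycle_embed[OF less.prems(1,2) fk(2,3,4) closed] unfolding C_def by blast
      qed
    qed
  qed
qed

definition pt :: "real \<Rightarrow> real \<Rightarrow> real^2" where
  "pt x y = vector [x, y]"

lemma pt_nth [simp]: "pt x y $ 1 = x" "pt x y $ 2 = y"
  unfolding pt_def by simp_all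

lemma pt_eq_iff [simp]: "pt x y = pt x' y' \<longleftrightarrow> x = x' \<and> y = y'"
  by (metis pt_nth vec_eq_iff forall_2)

lemma pt_lin: "pt x y = x *\<^sub>R pt 1 0 + y *\<^sub>R pt 0 1"
  by (simp add: vec_eq_iff forall_2)

definition pq :: "real \<Rightarrow> real \<Rightarrow> real \<Rightarrow> real^2" where
  "pq a b X = pt X ((X - a) * (b - X))"

definition par :: "real \<Rightarrow> real \<Rightarrow> real \<Rightarrow> real^2" where
  "par a b t = pq a b (a + (b - a) * t)"

lemma par_path: "path (par a b)"
  unfolding path_def par_def pq_def
  by (subst pt_lin) (intro continuous_intros)

lemma par_arc: "a < b \<Longrightarrow> arc (par a b)"
  unfolding arc_def
proof (intro conjI par_path)
  assume "a < b"
  show "inj_on (par a b) {0..1}"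
  proof
    fix s t assume "par a b s = par a b t"
    then have "a + (b - a) * s = a + (b - a) * t" unfolding par_def pq_def by simp
    then show "s = t" using \<open>a < b\<close> by simp
  qed
qed

lemma par_start [simp]: "pathstart (par a b) = pt a 0"
  unfolding pathstart_def par_def pq_def by simp

lemma par_finish [simp]: "pathfinish (par a b) = pt b 0"
  unfolding pathfinish_def par_def pq_def by simp

lemma par_image_D:
  assumes "a < b" "p \<in> path_image (par a b)"
  shows "\<exists>X. a \<le> X \<and> X \<le> b \<and> p = pq a b X"
proof -
  obtain t where t: "t \<in> {0..1}" "p = par a b t" using assms(2) unfolding path_image_def by blast
  have "0 \<le> (b - a) * t" "(b - a) * t \<le> b - a" using t(1) assms(1) by (auto simp: mult_le_cancel_left1)
  then show ?thesis using t unfolding par_def by (intro exI[of _ "a + (b - a) * t"]) auto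
qed

lemma par_image_ends: "pt a 0 \<in> path_image (par a b)" "pt b 0 \<in> path_image (par a b)"
  using pathstart_in_path_image[of "par a b"] pathfinish_in_path_image[of "par a b"] by simp_all

lemma nested_meet:
  fixes a b c d X :: real
  assumes "c \<le> a" "a < b" "b \<le> d" "(a, b) \<noteq> (c, d)" "a \<le> X" "X \<le> b"
    "(X - a) * (b - X) = (X - c) * (d - X)"
  shows "X = a \<or> X = b"
proof (rule ccontr)
  assume "\<not> (X = a \<or> X = b)"
  then have pos: "X - a > 0" "b - X > 0" using assms by auto
  have id: "(X - c) * (d - X) - (X - a) * (b - X) = (a - c) * (d - X) + (X - a) * (d - b)"
    by (simp add: algebra_simps)
  have t1: "(a - c) * (d - X) \<ge> 0" using assms pos by (intro mult_nonneg_nonneg) auto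
  have t2: "(X - a) * (d - b) \<ge> 0" using assms pos by (intro mult_nonneg_nonneg) auto
  have "(a - c) * (d - X) = 0" "(X - a) * (d - b) = 0" using id t1 t2 assms(7) by linarith+
  then have "a = c" "d = b" using pos assms by auto
  then show False using assms(4) by simp
qed

lemma par_meet:
  fixes a b c d X :: real
  assumes "a < b" "c < d" "\<not> (a < c \<and> c < b \<and> b < d)" "\<not> (c < a \<and> a < d \<and> d < b)"
    "(a, b) \<noteq> (c, d)" "a \<le> X" "X \<le> b" "c \<le> X" "X \<le> d"
    "(X - a) * (b - X) = (X - c) * (d - X)"
  shows "(X = a \<or> X = b) \<and> (X = c \<or> X = d)"
proof -
  have z: "(X - a) * (b - X) = 0 \<longleftrightarrow> X = a \<or> X = b" by auto
  have z': "(X - c) * (d - X) = 0 \<longleftrightarrow> X = c \<or> X = d" by auto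
  consider "b \<le> c" | "d \<le> a" | "c \<le> a" "b \<le> d" | "a \<le> c" "d \<le> b" | "a = c" | "b = d"
    using assms(1-4) by linarith
  then show ?thesis
  proof cases
    case 1 then show ?thesis using assms by auto
  next
    case 2 then show ?thesis using assms by auto
  next
    case 3
    then have "X = a \<or> X = b" using nested_meet[of c a b d X] assms by auto
    then show ?thesis using z z' assms(10) by auto
  next
    case 4
    then have "X = c \<or> X = d" using nested_meet[of a c d b X] assms by auto
    then show ?thesis using z z' assms(10) by auto
  next
    case 5
    then have "(X - a) * (b - d) = 0" using assms(10) by (simp add: algebra_simps)
    then show ?thesis using 5 assms by auto
  next
    case 6
    then have "(b - X) * (c - a) = 0" using assms(10) by (simp add: algebra_simps)
    then show ?thesis using 6 assms by auto
  qed
qed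

lemma edge_minmax:
  assumes "inj_on r V" "x \<noteq> y" "x \<in> V" "y \<in> V"
  shows "Min (r ` {x, y}) < Max (r ` {x, y})"
    "{Min (r ` {x, y}), Max (r ` {x, y})} = r ` {x, y}"
proof -
  have ne: "r x \<noteq> r y" using assms unfolding inj_on_def by blast
  have mm: "Min (r ` {x, y}) = min (r x) (r y)" "Max (r ` {x, y}) = max (r x) (r y)" by simp_all
  show "Min (r ` {x, y}) < Max (r ` {x, y})" unfolding mm using ne by (auto simp: min_def max_def)
  show "{Min (r ` {x, y}), Max (r ` {x, y})} = r ` {x, y}"
  proof (cases "r x \<le> r y")
    case True
    then have "min (r x) (r y) = r x" "max (r x) (r y) = r y" by auto
    then show ?thesis unfolding mm by simp
  next
    case False
    then have "min (r x) (r y) = r y" "max (r x) (r y) = r x" by auto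
    then show ?thesis unfolding mm by (simp only: image_insert image_empty) blast
  qed
qed

lemma planar_from_order:
  assumes E: "edges_in V E" and inj: "inj_on r V" and nc: "nocross r E"
  shows "planar_graph V E"
proof -
  define pos where "pos x = pt (r x) 0" for x
  define lo where "lo e = Min (r ` e)" for e
  define hi where "hi e = Max (r ` e)" for e
  define \<gamma> where "\<gamma> e = par (lo e) (hi e)" for e
  have edge: "lo e < hi e \<and> {lo e, hi e} = r ` e \<and> e \<subseteq> V \<and> (\<exists>x y. x \<noteq> y \<and> e = {x, y})" if eE: "e \<in> E" for e
  proof -
    obtain x y where xy: "x \<noteq> y" "e = {x, y}" "x \<in> V" "y \<in> V" using E eE unfolding edges_in_def by metis
    show ?thesis using edge_minmax[OF inj xy(1,3,4)] xy unfolding lo_def hi_def by blast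
  qed
  have posV: "r x = r y \<Longrightarrow> x \<in> V \<Longrightarrow> y \<in> V \<Longrightarrow> x = y" for x y using inj unfolding inj_on_def by blast
  have pos_img: "pos ` e = {pt (lo e) 0, pt (hi e) 0}" if "e \<in> E" for e
  proof -
    have "pos ` e = (\<lambda>v. pt v 0) ` (r ` e)" unfolding pos_def by auto
    also have "\<dots> = (\<lambda>v. pt v 0) ` {lo e, hi e}" using edge[OF that] by simp
    finally show ?thesis by simp
  qed
  have pimg: "\<exists>v\<in>e. p = pos v" if pe: "e \<in> E" "p \<in> path_image (\<gamma> e)" "p $ 2 = 0" for e p
  proof -
    obtain X where X: "lo e \<le> X" "X \<le> hi e" "p = pq (lo e) (hi e) X"
      using par_image_D[of "lo e" "hi e" p] edge[OF pe(1)] pe(2) unfolding \<gamma>_def by blast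
    then have "(X - lo e) * (hi e - X) = 0" using pe(3) unfolding pq_def by simp
    then have "X = lo e \<or> X = hi e" by auto
    then have "X \<in> r ` e" using edge[OF pe(1)] by blast
    then obtain v where "v \<in> e" "X = r v" by blast
    moreover have "p = pt X 0" using X(3) \<open>X = lo e \<or> X = hi e\<close> unfolding pq_def by auto
    ultimately show ?thesis unfolding pos_def by blast
  qed
  show ?thesis
    unfolding planar_graph_def
  proof (intro exI[of _ pos] exI[of _ \<gamma>] conjI ballI impI)
    show "inj_on pos V" using inj unfolding pos_def inj_on_def by simp
  next
    fix e assume e: "e \<in> E"
    show "arc (\<gamma> e)" unfolding \<gamma>_def using edge[OF e] by (intro par_arc) blast
    show "{pathstart (\<gamma> e), pathfinish (\<gamma> e)} = pos ` e" unfolding \<gamma>_def using pos_img[OF e] by simp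
    show "path_image (\<gamma> e) \<inter> pos ` V = pos ` e"
    proof
      show "path_image (\<gamma> e) \<inter> pos ` V \<subseteq> pos ` e"
      proof
        fix p assume p: "p \<in> path_image (\<gamma> e) \<inter> pos ` V"
        then have "p $ 2 = 0" unfolding pos_def by auto
        then show "p \<in> pos ` e" using pimg[OF e] p by blast
      qed
      show "pos ` e \<subseteq> path_image (\<gamma> e) \<inter> pos ` V"
      proof
        fix q assume "q \<in> pos ` e"
        then obtain v where v: "v \<in> e" "q = pos v" by blast
        have "q \<in> {pt (lo e) 0, pt (hi e) 0}" using pos_img[OF e] \<open>q \<in> pos ` e\<close> by simp
        then have "q \<in> path_image (\<gamma> e)" using par_image_ends(1)[of "lo e" "hi e"] par_image_ends(2)[of "hi e" "lo e"] unfolding \<gamma>_def by blast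
        moreover have "v \<in> V" using edge[OF e] v(1) by blast
        ultimately show "q \<in> path_image (\<gamma> e) \<inter> pos ` V" using v(2) by blast
      qed
    qed
  next
    fix e e' assume e: "e \<in> E" and e': "e' \<in> E" and ne: "e \<noteq> e'"
    show "path_image (\<gamma> e) \<inter> path_image (\<gamma> e') \<subseteq> pos ` (e \<inter> e')"
    proof
      fix p assume p: "p \<in> path_image (\<gamma> e) \<inter> path_image (\<gamma> e')"
      obtain X where X: "lo e \<le> X" "X \<le> hi e" "p = pq (lo e) (hi e) X"
        using par_image_D[of "lo e" "hi e" p] edge[OF e] p unfolding \<gamma>_def by blast
      obtain X' where X': "lo e' \<le> X'" "X' \<le> hi e'" "p = pq (lo e') (hi e') X'"
        using par_image_D[of "lo e'" "hi e'" p] edge[OF e'] p unfolding \<gamma>_def by blast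
      have XX: "X' = X" "(X - lo e) * (hi e - X) = (X - lo e') * (hi e' - X)"
        using X(3) X'(3) unfolding pq_def by auto
      have li: "lo e \<in> r ` e" "hi e \<in> r ` e" "lo e' \<in> r ` e'" "hi e' \<in> r ` e'"
        using edge[OF e] edge[OF e'] by blast+
      obtain xa where xa: "xa \<in> e" "r xa = lo e" using li(1) by (metis imageE)
      obtain xb where xb: "xb \<in> e" "r xb = hi e" using li(2) by (metis imageE)
      obtain xc where xc: "xc \<in> e'" "r xc = lo e'" using li(3) by (metis imageE)
      obtain xd where xd: "xd \<in> e'" "r xd = hi e'" using li(4) by (metis imageE)
      have n1: "\<not> (lo e < lo e' \<and> lo e' < hi e \<and> hi e < hi e')"
        using nc[unfolded nocross_def, rule_format, OF e e' xa(1) xb(1) xc(1) xd(1)] xa xb xc xd by simp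
      have n2: "\<not> (lo e' < lo e \<and> lo e < hi e' \<and> hi e' < hi e)"
        using nc[unfolded nocross_def, rule_format, OF e' e xc(1) xd(1) xa(1) xb(1)] xa xb xc xd by simp
      have n3: "(lo e, hi e) \<noteq> (lo e', hi e')"
      proof
        assume "(lo e, hi e) = (lo e', hi e')"
        then have "r ` e = r ` e'" using edge[OF e] edge[OF e'] by auto
        moreover have "inj_on r (e \<union> e')" using inj edge[OF e] edge[OF e'] by (meson inj_on_subset le_sup_iff)
        ultimately have "e = e'" by (meson inj_on_Un_image_eq_iff)
        then show False using ne by blast
      qed
      have "(X = lo e \<or> X = hi e) \<and> (X = lo e' \<or> X = hi e')"
        using par_meet[OF _ _ n1 n2 n3 X(1,2) _ _ XX(2)] X'(1,2) XX(1) edge[OF e] edge[OF e'] by auto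
      then have "p $ 2 = 0" using X(3) unfolding pq_def by auto
      then obtain v where v: "v \<in> e" "p = pos v" using pimg[OF e] p by blast
      obtain v' where v': "v' \<in> e'" "p = pos v'" using pimg[OF e'] p \<open>p $ 2 = 0\<close> by blast
      have "r v = r v'" using v v' unfolding pos_def by simp
      then have "v = v'" using posV edge[OF e] edge[OF e'] v v' by blast
      then show "p \<in> pos ` (e \<inter> e')" using v v' by blast
    qed
  qed
qed

lemma planar_det:
  assumes "finite V" "edges_in V E" "\<not> badg E"
  shows "planar_graph V E"
proof -
  obtain r where "inj_on r V" "nocross r E" using comb_main[OF assms] by blast
  then show ?thesis using planar_from_order[OF assms(2)] by blast
qed

lemma bip_edge_cases:
  assumes "{u, w} \<in> bip_edges n1 n2 X"
  shows "(u \<in> Inl ` {..<n1} \<and> w \<in> Inr ` {..<n2}) \<or> (u \<in> Inr ` {..<n2} \<and> w \<in> Inl ` {..<n1})"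
proof -
  obtain i j where "{u, w} = {Inl i, Inr j}" "i < n1" "j < n2" using assms unfolding bip_edges_def by blast
  then show ?thesis by (auto simp: doubleton_eq_iff)
qed

lemma bip_edges_in: "edges_in (bip_vertices n1 n2) (bip_edges n1 n2 X)"
  unfolding edges_in_def bip_edges_def bip_vertices_def by blast

lemma finite_bip_vertices: "finite (bip_vertices n1 n2)"
  unfolding bip_vertices_def by simp

lemma card_bip_vertices: "card (bip_vertices n1 n2) = n1 + n2"
proof -
  have "card (Inl ` {..<n1} \<union> Inr ` {..<n2} :: (nat + nat) set) = card (Inl ` {..<n1} :: (nat + nat) set) + card (Inr ` {..<n2} :: (nat + nat) set)"
    by (rule card_Un_disjoint) auto
  also have "\<dots> = n1 + n2" by (simp add: card_image)
  finally show ?thesis unfolding bip_vertices_def .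
qed

definition side :: "nat \<Rightarrow> nat \<Rightarrow> nat \<Rightarrow> nat \<Rightarrow> (nat + nat) set" where
  "side n1 n2 s t = (if even (t + s) then Inl ` {..<n1} else Inr ` {..<n2})"

definition Alt :: "nat \<Rightarrow> nat \<Rightarrow> nat \<Rightarrow> nat \<Rightarrow> (nat \<Rightarrow> nat + nat) set" where
  "Alt n1 n2 s k = PiE {..k} (side n1 n2 s)"

definition Ev :: "nat \<Rightarrow> nat \<Rightarrow> nat \<Rightarrow> (nat \<Rightarrow> nat + nat) \<Rightarrow> nat \<Rightarrow> nat \<Rightarrow> nat \<Rightarrow> nat \<Rightarrow> (nat \<times> nat \<Rightarrow> bool) set" where
  "Ev n1 n2 k g a b c d = {X. inj_on g {..k} \<and> b \<le> k \<and> d \<le> k \<and> a + 2 \<le> b \<and> c + 2 \<le> d \<and> (a, b) \<noteq> (c, d)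
     \<and> (\<forall>t<k. {g t, g (Suc t)} \<in> bip_edges n1 n2 X) \<and> {g a, g b} \<in> bip_edges n1 n2 X \<and> {g c, g d} \<in> bip_edges n1 n2 X}"

lemma alternating:
  assumes "\<forall>t<k. {f t, f (Suc t)} \<in> bip_edges n1 n2 X" "f 0 \<in> side n1 n2 s 0"
  shows "\<forall>t\<le>k. f t \<in> side n1 n2 s t"
proof (intro allI impI)
  fix t assume "t \<le> k"
  then show "f t \<in> side n1 n2 s t"
  proof (induction t)
    case 0 then show ?case using assms(2) by simp
  next
    case (Suc t)
    then have IH: "f t \<in> side n1 n2 s t" by simp
    have e: "{f t, f (Suc t)} \<in> bip_edges n1 n2 X" using assms(1) Suc.prems by simp
    show ?case
    proof (cases "even (t + s)")
      case True
      then have "f t \<in> Inl ` {..<n1}" using IH unfolding side_def by simp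
      then have "f (Suc t) \<in> Inr ` {..<n2}" using bip_edge_cases[OF e] by auto
      then show ?thesis using True unfolding side_def by simp
    next
      case False
      then have "f t \<in> Inr ` {..<n2}" using IH unfolding side_def by simp
      then have "f (Suc t) \<in> Inl ` {..<n1}" using bip_edge_cases[OF e] by auto
      then show ?thesis using False unfolding side_def by simp
    qed
  qed
qed

lemma bad_cover:
  assumes "badg (bip_edges n1 n2 X)"
  shows "X \<in> (\<Union>k\<in>{..<n1+n2}. \<Union>s\<in>{..<2::nat}. \<Union>g\<in>Alt n1 n2 s k. \<Union>a\<in>{..k}. \<Union>b\<in>{..k}. \<Union>c\<in>{..k}. \<Union>d\<in>{..k}.
             Ev n1 n2 k g a b c d)"
proof -
  let ?E = "bip_edges n1 n2 X"
  obtain f k a b c d where bad: "gpath ?E f k" "b \<le> k" "d \<le> k" "a + 2 \<le> b" "c + 2 \<le> d"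
    "(a, b) \<noteq> (c, d)" "{f a, f b} \<in> ?E" "{f c, f d} \<in> ?E"
    using assms unfolding badg_def by blast
  have inj: "inj_on f {..k}" and pe: "\<forall>t<k. {f t, f (Suc t)} \<in> ?E" using bad(1) unfolding gpath_def by auto
  have k1: "1 \<le> k" using bad by simp
  have inV: "f t \<in> bip_vertices n1 n2" if "t \<le> k" for t
  proof (cases "t < k")
    case True
    then have "{f t, f (Suc t)} \<in> ?E" using pe by blast
    then show ?thesis using bip_edge_cases[of "f t" "f (Suc t)"] unfolding bip_vertices_def by blast
  next
    case False
    then have "t = Suc (k - 1)" using that k1 by simp
    moreover have "{f (k - 1), f (Suc (k - 1))} \<in> ?E" using spec[OF pe, of "k - 1"] k1 by simp
    ultimately show ?thesis using bip_edge_cases[of "f (k - 1)" "f (Suc (k - 1))"] unfolding bip_vertices_def by blast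
  qed
  have "card {..k} \<le> card (bip_vertices n1 n2)"
    using card_inj_on_le[OF inj _ finite_bip_vertices] inV by blast
  then have kN: "k < n1 + n2" by (simp add: card_bip_vertices)
  define s :: nat where "s = (if f 0 \<in> Inl ` {..<n1} then 0 else 1)"
  have s2: "s < 2" unfolding s_def by simp
  have "f 0 \<in> side n1 n2 s 0"
    using inV[of 0] unfolding s_def side_def bip_vertices_def by auto
  then have alt: "\<forall>t\<le>k. f t \<in> side n1 n2 s t" using alternating[OF pe] by blast
  define g where "g = restrict f {..k}"
  have gA: "g \<in> Alt n1 n2 s k" unfolding g_def Alt_def using alt by auto
  have gf: "g t = f t" if "t \<le> k" for t using that unfolding g_def by simp
  have ginj: "inj_on g {..k}" using inj gf by (metis inj_on_cong atMost_iff)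
  have gpe: "\<forall>t<k. {g t, g (Suc t)} \<in> ?E" using pe gf by simp
  have gab: "g a = f a" "g b = f b" "g c = f c" "g d = f d" using gf bad(2-5) by simp_all
  have "X \<in> Ev n1 n2 k g a b c d"
    unfolding Ev_def using bad(2-8) ginj gpe gab by simp
  moreover have "k \<in> {..<n1+n2}" "s \<in> {..<2}" "a \<in> {..k}" "b \<in> {..k}" "c \<in> {..k}" "d \<in> {..k}"
    using kN s2 bad(2-5) by auto
  ultimately show ?thesis using gA
    by (intro UN_I[of k] UN_I[of s] UN_I[of g] UN_I[of a] UN_I[of b] UN_I[of c] UN_I[of d]) assumption+
qed

lemma prob_all_true:
  assumes "finite A" "S \<subseteq> A" "0 \<le> p" "p \<le> 1"
  shows "measure_pmf.prob (Pi_pmf A False (\<lambda>_. bernoulli_pmf p)) {X. \<forall>s\<in>S. X s} = p ^ card S"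
proof -
  define B where "B x = (if x \<in> S then {True} else UNIV)" for x
  have "{X. \<forall>s\<in>S. X s} = Pi A B" unfolding B_def Pi_def using assms(2) by auto
  then have "measure_pmf.prob (Pi_pmf A False (\<lambda>_. bernoulli_pmf p)) {X. \<forall>s\<in>S. X s}
      = (\<Prod>x\<in>A. measure_pmf.prob (bernoulli_pmf p) (B x))"
    using measure_Pi_pmf_Pi[OF assms(1)] by simp
  also have "\<dots> = (\<Prod>x\<in>A. if x \<in> S then p else 1)"
    by (intro prod.cong) (auto simp: B_def measure_pmf_single assms(3,4))
  also have "\<dots> = (\<Prod>x\<in>S. p)"
    using assms(1,2) by (subst prod.If_cases) (auto simp: Int_absorb1 Int_absorb2)
  finally show ?thesis by simp
qed

lemma doubleton_inj:
  assumes "inj_on g A" "x \<in> A" "y \<in> A" "z \<in> A" "w \<in> A" "{g x, g y} = {g z, g w}"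
  shows "(x = z \<and> y = w) \<or> (x = w \<and> y = z)"
proof -
  have "(g x = g z \<and> g y = g w) \<or> (g x = g w \<and> g y = g z)" using assms(6) by (auto simp: doubleton_eq_iff)
  then show ?thesis using assms(1-5) unfolding inj_on_def by blast
qed

lemma card_pathset:
  assumes "inj_on g {..k}" "b \<le> k" "d \<le> k" "a + 2 \<le> b" "c + 2 \<le> d" "(a, b) \<noteq> (c, d)"
  shows "card ((\<lambda>t. {g t, g (Suc t)}) ` {..<k} \<union> {{g a, g b}, {g c, g d}}) = k + 2"
proof -
  let ?P = "(\<lambda>t. {g t, g (Suc t)}) ` {..<k}"
  have injP: "inj_on (\<lambda>t. {g t, g (Suc t)}) {..<k}"
  proof
    fix t t' assume tt: "t \<in> {..<k}" "t' \<in> {..<k}" "{g t, g (Suc t)} = {g t', g (Suc t')}"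
    then show "t = t'" using doubleton_inj[OF assms(1), of t "Suc t" t' "Suc t'"] by auto
  qed
  have cP: "card ?P = k" using card_image[OF injP] by simp
  have notP: "{g x, g y} \<notin> ?P" if "x + 2 \<le> y" "y \<le> k" for x y
  proof
    assume "{g x, g y} \<in> ?P"
    then obtain t where "t < k" "{g x, g y} = {g t, g (Suc t)}" by auto
    then show False using doubleton_inj[OF assms(1), of x y t "Suc t"] that by auto
  qed
  have ne: "{g a, g b} \<noteq> {g c, g d}"
  proof
    assume "{g a, g b} = {g c, g d}"
    then show False using doubleton_inj[OF assms(1), of a b c d] assms by auto
  qed
  have "?P \<union> {{g a, g b}, {g c, g d}} = insert {g a, g b} (insert {g c, g d} ?P)" by auto
  moreover have "card (insert {g a, g b} (insert {g c, g d} ?P)) = k + 2"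
    using notP[of a b] notP[of c d] assms ne cP by simp
  ultimately show ?thesis by simp
qed

lemma prob_Ev:
  assumes "0 \<le> p" "p \<le> 1"
  shows "measure_pmf.prob (random_bip n1 n2 p) (Ev n1 n2 k g a b c d) \<le> p ^ (k + 2)"
proof (cases "Ev n1 n2 k g a b c d = {}")
  case True then show ?thesis using assms by simp
next
  case False
  then obtain X0 where X0: "X0 \<in> Ev n1 n2 k g a b c d" by blast
  define ES where "ES = (\<lambda>t. {g t, g (Suc t)}) ` {..<k} \<union> {{g a, g b}, {g c, g d}}"
  have conds: "inj_on g {..k}" "b \<le> k" "d \<le> k" "a + 2 \<le> b" "c + 2 \<le> d" "(a, b) \<noteq> (c, d)"
    using X0 unfolding Ev_def by auto
  have cES: "card ES = k + 2" unfolding ES_def by (rule card_pathset[OF conds])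
  have ESX: "ES \<subseteq> bip_edges n1 n2 X" if "X \<in> Ev n1 n2 k g a b c d" for X
    using that unfolding Ev_def ES_def by auto
  define S where "S = {(i, j). i < n1 \<and> j < n2 \<and> {Inl i, Inr j} \<in> ES}"
  have SA: "S \<subseteq> {..<n1} \<times> {..<n2}" unfolding S_def by auto
  have bij: "bij_betw (\<lambda>(i, j). {Inl i, Inr j} :: (nat + nat) set) S ES"
    unfolding bij_betw_def
  proof
    show "inj_on (\<lambda>(i, j). {Inl i, Inr j} :: (nat + nat) set) S"
      by (auto simp: inj_on_def doubleton_eq_iff)
    show "(\<lambda>(i, j). {Inl i, Inr j}) ` S = ES"
    proof
      show "(\<lambda>(i, j). {Inl i, Inr j}) ` S \<subseteq> ES" unfolding S_def by auto
      show "ES \<subseteq> (\<lambda>(i, j). {Inl i, Inr j}) ` S"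
      proof
        fix e assume "e \<in> ES"
        then have "e \<in> bip_edges n1 n2 X0" using ESX[OF X0] by blast
        then obtain i j where "e = {Inl i, Inr j}" "i < n1" "j < n2" unfolding bip_edges_def by blast
        then show "e \<in> (\<lambda>(i, j). {Inl i, Inr j}) ` S" using \<open>e \<in> ES\<close> unfolding S_def by auto
      qed
    qed
  qed
  have cS: "card S = k + 2" using bij_betw_same_card[OF bij] cES by simp
  have sub: "Ev n1 n2 k g a b c d \<subseteq> {X. \<forall>s\<in>S. X s}"
  proof
    fix X assume X: "X \<in> Ev n1 n2 k g a b c d"
    show "X \<in> {X. \<forall>s\<in>S. X s}"
    proof (intro CollectI ballI)
      fix s assume "s \<in> S"
      then obtain i j where s: "s = (i, j)" "{Inl i, Inr j} \<in> ES" unfolding S_def by blast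
      then have "{Inl i, Inr j} \<in> bip_edges n1 n2 X" using ESX[OF X] by blast
      then obtain i' j' where "{Inl i, Inr j} = ({Inl i', Inr j'} :: (nat + nat) set)" "X (i', j')"
        unfolding bip_edges_def by blast
      then show "X s" using s by (auto simp: doubleton_eq_iff)
    qed
  qed
  have "measure_pmf.prob (random_bip n1 n2 p) (Ev n1 n2 k g a b c d)
      \<le> measure_pmf.prob (random_bip n1 n2 p) {X. \<forall>s\<in>S. X s}"
    by (rule measure_pmf.finite_measure_mono[OF sub]) simp
  also have "\<dots> = p ^ card S" unfolding random_bip_def by (rule prob_all_true[OF _ SA assms]) simp
  finally show ?thesis using cS by simp
qed

lemma ub:
  assumes "finite I" "\<And>i. i \<in> I \<Longrightarrow> measure_pmf.prob M (A i) \<le> f i"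
  shows "measure_pmf.prob M (\<Union>i\<in>I. A i) \<le> sum f I"
proof -
  have "measure_pmf.prob M (\<Union>i\<in>I. A i) \<le> (\<Sum>i\<in>I. measure_pmf.prob M (A i))"
    by (rule measure_pmf.finite_measure_subadditive_finite[OF assms(1)]) simp
  also have "\<dots> \<le> sum f I" by (rule sum_mono) (rule assms(2))
  finally show ?thesis .
qed

lemma finite_Alt: "finite (Alt n1 n2 s k)"
  unfolding Alt_def side_def by (intro finite_PiE) auto

lemma card_Alt: "card (Alt n1 n2 s k) = (\<Prod>t\<le>k. if even (t + s) then n1 else n2)"
  unfolding Alt_def
  by (subst card_PiE) (auto simp: side_def card_image intro!: prod.cong)

lemma prob_bad:
  assumes "0 \<le> p" "p \<le> 1"
  shows "measure_pmf.prob (random_bip n1 n2 p) {X. badg (bip_edges n1 n2 X)}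
    \<le> (\<Sum>k<n1+n2. \<Sum>s<2. real (card (Alt n1 n2 s k)) * (real k + 1) ^ 4 * p ^ (k + 2))"
proof -
  have "measure_pmf.prob (random_bip n1 n2 p) {X. badg (bip_edges n1 n2 X)}
     \<le> measure_pmf.prob (random_bip n1 n2 p) (\<Union>k\<in>{..<n1+n2}. \<Union>s\<in>{..<2::nat}. \<Union>g\<in>Alt n1 n2 s k. \<Union>a\<in>{..k}. \<Union>b\<in>{..k}. \<Union>c\<in>{..k}. \<Union>d\<in>{..k}.
             Ev n1 n2 k g a b c d)"
    by (rule measure_pmf.finite_measure_mono) (use bad_cover in auto)
  also have "\<dots> \<le> (\<Sum>k<n1+n2. \<Sum>s<2. \<Sum>g\<in>Alt n1 n2 s k. \<Sum>a\<le>k. \<Sum>b\<le>k. \<Sum>c\<le>k. \<Sum>d\<le>k. p ^ (k + 2))"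
    by (intro ub finite_lessThan finite_atMost finite_Alt prob_Ev assms)
  also have "\<dots> = (\<Sum>k<n1+n2. \<Sum>s<2. real (card (Alt n1 n2 s k)) * (real k + 1) ^ 4 * p ^ (k + 2))"
    by (intro sum.cong refl) (simp add: power4_eq_xxxx algebra_simps)
  finally show ?thesis .
qed

lemma alt_prod:
  fixes \<alpha> \<beta> \<delta> :: real
  assumes "0 \<le> \<alpha>" "0 \<le> \<beta>" "\<alpha> * \<beta> = \<delta> ^ 2" "0 \<le> \<delta>"
  shows "(\<Prod>t\<le>k. if even (t + s) then \<alpha> else \<beta>) \<le> \<delta> ^ k * max \<alpha> \<beta>"
proof -
  let ?g = "\<lambda>t. if even (t + s) then \<alpha> else \<beta>"
  have g0: "0 \<le> ?g t" for t using assms by auto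
  have pair: "?g (Suc t) * ?g (Suc (Suc t)) = \<delta> ^ 2" for t using assms(3) by (auto simp: mult.commute)
  have dm: "\<delta> \<le> max \<alpha> \<beta>"
  proof -
    have "\<alpha> * \<beta> \<le> max \<alpha> \<beta> * max \<alpha> \<beta>"
      by (rule mult_mono) (use assms(1,2) in auto)
    then have "\<delta> ^ 2 \<le> (max \<alpha> \<beta>) ^ 2" using assms(3) by (simp add: power2_eq_square)
    then show ?thesis by (rule power2_le_imp_le) (use assms(1) in auto)
  qed
  have "(\<Prod>t\<le>k. ?g t) \<le> \<delta> ^ k * max \<alpha> \<beta> \<and> (\<Prod>t\<le>Suc k. ?g t) \<le> \<delta> ^ Suc k * max \<alpha> \<beta>"
  proof (induction k)
    case 0
    have "?g 0 \<le> max \<alpha> \<beta>" by auto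
    moreover have "?g 0 * ?g 1 = \<delta> ^ 2" using assms(3) by (auto simp: mult.commute)
    moreover have "\<delta> ^ 2 \<le> \<delta> * max \<alpha> \<beta>" using dm assms(4) by (simp add: power2_eq_square mult_left_mono)
    ultimately show ?case by simp
  next
    case (Suc k)
    have "(\<Prod>t\<le>Suc (Suc k). ?g t) = (\<Prod>t\<le>k. ?g t) * (?g (Suc k) * ?g (Suc (Suc k)))"
      by (simp add: mult.assoc)
    also have "\<dots> = (\<Prod>t\<le>k. ?g t) * \<delta> ^ 2" using pair by simp
    also have "\<dots> \<le> \<delta> ^ k * max \<alpha> \<beta> * \<delta> ^ 2" using Suc.IH by (intro mult_right_mono) auto
    also have "\<dots> = \<delta> ^ Suc (Suc k) * max \<alpha> \<beta>" by (simp add: power2_eq_square algebra_simps)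
    finally show ?case using Suc.IH by simp
  qed
  then show ?thesis by blast
qed

lemma term_bound:
  fixes N1 N2 :: nat and d p :: real
  assumes "1 \<le> N1" "N1 \<le> N2" "0 < d" "p = d / sqrt (real N1 * real N2)"
  shows "real (card (Alt N1 N2 s k)) * p ^ (k + 2) \<le> d ^ k * (d ^ 2 / real N1)"
proof -
  have pos: "0 < real N1" "0 < real N2" using assms(1,2) by auto
  have sq: "sqrt (real N1 * real N2) ^ 2 = real N1 * real N2" using pos by simp
  have sqp: "0 < sqrt (real N1 * real N2)" using pos by simp
  have p0: "0 \<le> p" using assms(3,4) sqp by simp
  have p2: "p ^ 2 = d ^ 2 / (real N1 * real N2)" using assms(4) sq by (simp add: power_divide)
  define \<alpha> where "\<alpha> = real N1 * p"
  define \<beta> where "\<beta> = real N2 * p"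
  have ab: "\<alpha> * \<beta> = d ^ 2" unfolding \<alpha>_def \<beta>_def
  proof -
    have "real N1 * p * (real N2 * p) = (real N1 * real N2) * p ^ 2" by (simp add: power2_eq_square)
    also have "\<dots> = d ^ 2" using p2 pos by simp
    finally show "real N1 * p * (real N2 * p) = d ^ 2" .
  qed
  have mx: "max \<alpha> \<beta> = \<beta>" unfolding \<alpha>_def \<beta>_def using assms(2) p0 by (simp add: mult_right_mono)
  have cA: "real (card (Alt N1 N2 s k)) = (\<Prod>t\<le>k. if even (t + s) then real N1 else real N2)"
    unfolding card_Alt of_nat_prod by (intro prod.cong) auto
  have "(\<Prod>t\<le>k. (if even (t + s) then real N1 else real N2) * p) = (\<Prod>t\<le>k. if even (t + s) then real N1 else real N2) * p ^ (k + 1)"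
    by (subst prod.distrib) simp
  then have "real (card (Alt N1 N2 s k)) * p ^ (k + 1) = (\<Prod>t\<le>k. (if even (t + s) then real N1 else real N2) * p)"
    using cA by simp
  also have "\<dots> = (\<Prod>t\<le>k. if even (t + s) then \<alpha> else \<beta>)"
    unfolding \<alpha>_def \<beta>_def by (intro prod.cong) auto
  also have "\<dots> \<le> d ^ k * max \<alpha> \<beta>"
    by (rule alt_prod) (use ab p0 assms(3) in \<open>auto simp: \<alpha>_def \<beta>_def\<close>)
  finally have "real (card (Alt N1 N2 s k)) * p ^ (k + 1) * p \<le> d ^ k * \<beta> * p"
    using mx p0 by (intro mult_right_mono) auto
  moreover have "d ^ k * \<beta> * p = d ^ k * (d ^ 2 / real N1)"
  proof -
    have "\<beta> * p = real N2 * p ^ 2" unfolding \<beta>_def by (simp add: power2_eq_square)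
    also have "\<dots> = d ^ 2 / real N1" using p2 pos by (simp add: field_simps)
    finally show ?thesis by (simp add: mult.assoc)
  qed
  moreover have "real (card (Alt N1 N2 s k)) * p ^ (k + 2) = real (card (Alt N1 N2 s k)) * p ^ (k + 1) * p"
    by (simp add: algebra_simps)
  ultimately show ?thesis by linarith
qed

lemma summable_poly_geom:
  fixes d :: real
  assumes "0 \<le> d" "d < 1"
  shows "summable (\<lambda>k. (real k + 1) ^ 4 * d ^ k)"
proof (cases "d = 0")
  case True
  then show ?thesis by simp
next
  case False
  then have d0: "0 < d" using assms by simp
  define c where "c = (1 + d) / 2"
  have c1: "c < 1" unfolding c_def using assms by simp
  have lim: "(\<lambda>n. ((real n + 2) / (real n + 1)) ^ 4) \<longlonglongrightarrow> 1"
  proof -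
    have eq: "(real n + 2) / (real n + 1) = 1 + inverse (real (Suc n))" for n
      by (simp add: field_simps)
    have "(\<lambda>n. (1 + inverse (real (Suc n))) ^ 4) \<longlonglongrightarrow> (1::real) ^ 4"
      by (intro tendsto_power LIMSEQ_inverse_real_of_nat_add)
    then show ?thesis unfolding eq by simp
  qed
  have "1 < c / d" unfolding c_def using d0 assms by (simp add: field_simps)
  then have "eventually (\<lambda>n. ((real n + 2) / (real n + 1)) ^ 4 < c / d) sequentially"
    using order_tendstoD(2)[OF lim] by blast
  then obtain N where N: "\<And>n. n \<ge> N \<Longrightarrow> ((real n + 2) / (real n + 1)) ^ 4 < c / d"
    unfolding eventually_sequentially by blast
  show ?thesis
  proof (rule summable_ratio_test[OF c1, of N])
    fix n assume "N \<le> n"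
    have q: "((real n + 2) / (real n + 1)) ^ 4 * d \<le> c" using N[OF \<open>N \<le> n\<close>] d0 by (simp add: field_simps)
    have "(real (Suc n) + 1) ^ 4 * d ^ Suc n = (((real n + 2) / (real n + 1)) ^ 4 * d) * ((real n + 1) ^ 4 * d ^ n)"
      by (simp add: field_simps power_divide)
    also have "\<dots> \<le> c * ((real n + 1) ^ 4 * d ^ n)"
      by (rule mult_right_mono[OF q]) (use assms in simp)
    finally show "norm ((real (Suc n) + 1) ^ 4 * d ^ Suc n) \<le> c * norm ((real n + 1) ^ 4 * d ^ n)"
      using assms by simp
  qed
qed

theorem theorem1p3:
  fixes n1 n2 :: "nat \<Rightarrow> nat" and d :: real
  assumes "filterlim n1 at_top sequentially"
    and "\<And>n. n1 n \<le> n2 n"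
    and "0 < d" and "d < 1"
  shows "(\<lambda>n. measure_pmf.prob (random_bip (n1 n) (n2 n) (d / sqrt (real (n1 n) * real (n2 n))))
            {X. planar_graph (bip_vertices (n1 n) (n2 n)) (bip_edges (n1 n) (n2 n) X)})
         \<longlonglongrightarrow> 1"
proof -
  define P where "P n = measure_pmf.prob (random_bip (n1 n) (n2 n) (d / sqrt (real (n1 n) * real (n2 n))))
            {X. planar_graph (bip_vertices (n1 n) (n2 n)) (bip_edges (n1 n) (n2 n) X)}" for n
  define S where "S = (\<Sum>k. (real k + 1) ^ 4 * d ^ k)"
  have summ: "summable (\<lambda>k. (real k + 1) ^ 4 * d ^ k)" using summable_poly_geom assms(3,4) by simp
  have sumle: "(\<Sum>k<N. (real k + 1) ^ 4 * d ^ k) \<le> S" for N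
    unfolding S_def by (rule sum_le_suminf[OF summ]) (use assms(3) in auto)
  have ev1: "eventually (\<lambda>n. 1 \<le> n1 n) sequentially"
    using assms(1) unfolding filterlim_at_top by blast
  have lower: "eventually (\<lambda>n. 1 - 2 * (d ^ 2 * S) / real (n1 n) \<le> P n) sequentially"
    using ev1
  proof (rule eventually_mono)
    fix n assume n1: "1 \<le> n1 n"
    define N1 where "N1 = n1 n"
    define N2 where "N2 = n2 n"
    define p where "p = d / sqrt (real N1 * real N2)"
    have N12: "1 \<le> N1" "N1 \<le> N2" using n1 assms(2) unfolding N1_def N2_def by auto
    have sq: "real N1 \<le> sqrt (real N1 * real N2)"
    proof -
      have "sqrt (real N1 * real N1) \<le> sqrt (real N1 * real N2)" using N12 by (intro real_sqrt_le_mono) simp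
      then show ?thesis by simp
    qed
    have p0: "0 \<le> p" unfolding p_def using assms(3) by simp
    have p1: "p \<le> 1"
    proof -
      have "p \<le> d / real N1" unfolding p_def using sq N12 assms(3) by (intro divide_left_mono) auto
      also have "\<dots> \<le> d" using N12 assms(3) by (simp add: divide_le_eq)
      finally show ?thesis using assms(4) by simp
    qed
    let ?M = "random_bip N1 N2 p"
    have "measure_pmf.prob ?M {X. badg (bip_edges N1 N2 X)}
        \<le> (\<Sum>k<N1+N2. \<Sum>s<2. real (card (Alt N1 N2 s k)) * (real k + 1) ^ 4 * p ^ (k + 2))"
      by (rule prob_bad[OF p0 p1])
    also have "\<dots> \<le> (\<Sum>k<N1+N2. \<Sum>s<(2::nat). (real k + 1) ^ 4 * (d ^ k * (d ^ 2 / real N1)))"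
    proof (intro sum_mono)
      fix k s
      have "real (card (Alt N1 N2 s k)) * p ^ (k + 2) \<le> d ^ k * (d ^ 2 / real N1)"
        by (rule term_bound[OF N12 assms(3) p_def])
      then have "(real k + 1) ^ 4 * (real (card (Alt N1 N2 s k)) * p ^ (k + 2)) \<le> (real k + 1) ^ 4 * (d ^ k * (d ^ 2 / real N1))"
        by (intro mult_left_mono) auto
      then show "real (card (Alt N1 N2 s k)) * (real k + 1) ^ 4 * p ^ (k + 2) \<le> (real k + 1) ^ 4 * (d ^ k * (d ^ 2 / real N1))"
        by (simp add: mult_ac)
    qed
    also have "\<dots> = 2 * (d ^ 2 / real N1) * (\<Sum>k<N1+N2. (real k + 1) ^ 4 * d ^ k)"
      by (simp add: sum_distrib_left mult_ac)
    also have "\<dots> \<le> 2 * (d ^ 2 / real N1) * S"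
      by (intro mult_left_mono sumle) auto
    finally have bad: "measure_pmf.prob ?M {X. badg (bip_edges N1 N2 X)} \<le> 2 * (d ^ 2 * S) / real N1" by simp
    have c1: "measure_pmf.prob ?M {X. \<not> badg (bip_edges N1 N2 X)} = 1 - measure_pmf.prob ?M {X. badg (bip_edges N1 N2 X)}"
    proof -
      have "{X. \<not> badg (bip_edges N1 N2 X)} = space (measure_pmf ?M) - {X. badg (bip_edges N1 N2 X)}" by auto
      then show ?thesis using measure_pmf.prob_compl[of "{X. badg (bip_edges N1 N2 X)}" ?M] by simp
    qed
    have c2: "measure_pmf.prob ?M {X. \<not> badg (bip_edges N1 N2 X)}
        \<le> measure_pmf.prob ?M {X. planar_graph (bip_vertices N1 N2) (bip_edges N1 N2 X)}"
      by (rule measure_pmf.finite_measure_mono)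
         (auto intro: planar_det[OF finite_bip_vertices bip_edges_in])
    have c3: "P n = measure_pmf.prob ?M {X. planar_graph (bip_vertices N1 N2) (bip_edges N1 N2 X)}"
      unfolding P_def N1_def N2_def p_def by simp
    show "1 - 2 * (d ^ 2 * S) / real (n1 n) \<le> P n"
      using c1 c2 c3 bad unfolding N1_def by linarith
  qed
  have upper: "eventually (\<lambda>n. P n \<le> 1) sequentially"
    unfolding P_def by (intro always_eventually allI measure_pmf.prob_le_1)
  have inf: "filterlim (\<lambda>n. real (n1 n)) at_infinity sequentially"
    by (rule filterlim_at_top_imp_at_infinity, rule filterlim_compose[OF filterlim_real_sequentially assms(1)])
  have "(\<lambda>n. 2 * (d ^ 2 * S) / real (n1 n)) \<longlonglongrightarrow> 0"
    by (rule tendsto_divide_0[OF tendsto_const inf])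
  then have lim: "(\<lambda>n. 1 - 2 * (d ^ 2 * S) / real (n1 n)) \<longlonglongrightarrow> 1"
    using tendsto_diff[OF tendsto_const[of 1]] by fastforce
  have "P \<longlonglongrightarrow> 1" by (rule tendsto_sandwich[OF lower upper lim tendsto_const])
  then show ?thesis unfolding P_def .
qed

end
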